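(* Let $r\ge2$ be an integer. Then $\mathcal C_r(0)=1$, $\mathcal C_r'(0)=0$, and for all $x\in D\setminus\{0\}$, $$\mathcal C_r''(x)=(1-x^{1-r})\frac{\mathcal C_r'(x)^2}{\mathcal C_r(x)}+(r-1)\frac{\mathcal C_r'(x)}{x}-\pi^2x^{r-1}\mathcal C_r(x).$$
   Context: For an integer $r\ge2$ let $P_r(y)=(1-y)\exp\left(y+\frac{y^2}{2}+\cdots+\frac{y^r}{r}\right)$. The multiple cosine function of Kurokawa–Koyama of order $r\ge2$ is $\mathcal C_r(x)=\prod_{n\ge1,\ n\text{ odd}}\left\{P_r\left(\frac{x}{n/2}\right)P_r\left(-\frac{x}{n/2}\right)^{(-1)^{r-1}}\right\}^{(n/2)^{r-1}}$, interpreted as $\mathcal C_r(x)=\exp\Big(\sum_{n\ge1,\,n\text{ odd}}(n/2)^{r-1}\big[\operatorname{Log}P_r(2x/n)+(-1)^{r-1}\operatorname{Log}P_r(-2x/n)\big]\Big)$, where $\operatorname{Log}P_r(y):=\operatorname{Log}(1-y)+y+\frac{y^2}{2}+\cdots+\frac{y^r}{r}$ with $\operatorname{Log}$ the principal branch, for $x\in D=\mathbb C\setminus\big((-\infty,-\tfrac12]\cup[\tfrac12,\infty)\big)$ (a holomorphic function on $D$). *)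

theory Defs
  imports "HOL-Complex_Analysis.Complex_Analysis"
begin

definition LogP :: "nat \<Rightarrow> complex \<Rightarrow> complex" where
  "LogP r y = Ln (1 - y) + (\<Sum>k=1..r. y ^ k / of_nat k)"

text \<open>Multiple cosine of order r; the product over odd n is indexed by n = 2m+1.\<close>
definition mcos :: "nat \<Rightarrow> complex \<Rightarrow> complex" where
  "mcos r x = exp (\<Sum>m. (of_nat (2*m+1) / 2) ^ (r - 1) *
       (LogP r (2 * x / of_nat (2*m+1)) + (-1) ^ (r - 1) * LogP r (- 2 * x / of_nat (2*m+1))))"

definition mcosD :: "complex set" where
  "mcosD = - {z. Im z = 0 \<and> \<bar>Re z\<bar> \<ge> 1/2}"

end

theory Submission
  imports Defs
begin


lemma LogP_deriv:
  assumes "1 - w \<notin> \<real>\<^sub>\<le>\<^sub>0"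
  shows "(LogP r has_field_derivative - (w ^ r / (1 - w))) (at w)"
proof -
  have w1: "1 - w \<noteq> 0" using assms by auto
  have d: "(LogP r has_field_derivative (- inverse (1 - w) + (\<Sum>k=1..r. w ^ (k - 1)))) (at w)"
    unfolding LogP_def[abs_def]
    apply (rule derivative_eq_intros has_field_derivative_Ln[THEN DERIV_chain2] | simp add: assms)+
    done
  have s: "(\<Sum>k=1..r. w ^ (k - 1)) = (\<Sum>k<r. w ^ k)"
    by (induction r) (auto simp: atLeastAtMostSuc_conv)
  have "- inverse (1 - w) + (\<Sum>k<r. w ^ k) = - (w ^ r / (1 - w))"
    using one_diff_power_eq[of w r] w1 by (simp add: field_simps)
  with d s show ?thesis by simp
qed

lemma LogP_0: "LogP r 0 = 0"
  by (simp add: LogP_def power_0_left)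

lemma one_minus_notin: "norm (z::complex) < 1 \<Longrightarrow> 1 - z \<notin> \<real>\<^sub>\<le>\<^sub>0"
proof
  assume "norm z < 1" "1 - z \<in> \<real>\<^sub>\<le>\<^sub>0"
  then obtain t where "1 - z = complex_of_real t" "t \<le> 0" by (auto simp: nonpos_Reals_def)
  then have "Re (1 - z) \<le> 0" by (metis Re_complex_of_real)
  moreover have "\<bar>Re z\<bar> < 1" using \<open>norm z < 1\<close> abs_Re_le_cmod[of z] by linarith
  ultimately show False by simp
qed

lemma LogP_bound:
  assumes "norm w \<le> 1/2"
  shows "norm (LogP r w) \<le> 2 * norm w ^ (r + 1)"
proof -
  define \<rho> where "\<rho> = norm w"
  have B: "norm (- (z ^ r / (1 - z))) \<le> 2 * \<rho> ^ r" if z: "z \<in> cball 0 \<rho>" for z :: complex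
  proof -
    have nz: "norm z \<le> \<rho>" using z by simp
    have "1 - norm z \<le> norm (1 - z)" using norm_triangle_ineq2[of 1 z] by simp
    hence h: "1/2 \<le> norm (1 - z)" using nz assms \<rho>_def by linarith
    have "norm (- (z ^ r / (1 - z))) = norm z ^ r / norm (1 - z)"
      by (simp add: norm_divide norm_power)
    also have "\<dots> \<le> \<rho> ^ r / (1/2)"
      using h nz by (intro frac_le power_mono) (auto simp: \<rho>_def)
    finally show ?thesis by simp
  qed
  have "norm (LogP r w - LogP r 0) \<le> 2 * \<rho> ^ r * norm (w - 0)"
  proof (rule field_differentiable_bound[where S = "cball 0 \<rho>"])
    fix z :: complex assume z: "z \<in> cball 0 \<rho>"
    hence "norm z < 1" using assms \<rho>_def by simp
    show "(LogP r has_field_derivative - (z ^ r / (1 - z))) (at z within cball 0 \<rho>)"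
      by (rule has_field_derivative_at_within[OF LogP_deriv[OF one_minus_notin[OF \<open>norm z < 1\<close>]]])
  next
    show "convex (cball (0::complex) \<rho>)" by simp
  next
    fix z :: complex assume "z \<in> cball 0 \<rho>" thus "norm (- (z ^ r / (1 - z))) \<le> 2 * \<rho> ^ r" by (rule B)
  next
    show "w \<in> cball 0 \<rho>" by (simp add: \<rho>_def)
  next
    show "0 \<in> cball (0::complex) \<rho>" by (simp add: \<rho>_def)
  qed
  thus ?thesis by (simp add: LogP_0 \<rho>_def mult_ac)
qed

definition fterm :: "nat \<Rightarrow> nat \<Rightarrow> complex \<Rightarrow> complex" where
  "fterm r m x = (of_nat (2*m+1) / 2) ^ (r - 1) *
       (LogP r (2 * x / of_nat (2*m+1)) + (-1) ^ (r - 1) * LogP r (- 2 * x / of_nat (2*m+1)))"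

definition fder :: "nat \<Rightarrow> nat \<Rightarrow> complex \<Rightarrow> complex" where
  "fder r m x = - (x ^ r * 8 / ((of_nat (2*m+1))\<^sup>2 - 4 * x\<^sup>2))"

lemma mcos_eq: "mcos r x = exp (\<Sum>m. fterm r m x)"
  by (simp add: mcos_def fterm_def)

lemma mcosD_real: 
  assumes "x \<in> mcosD" "x = complex_of_real t" shows "\<bar>t\<bar> < 1/2"
  using assms by (auto simp: mcosD_def)

lemma notin_nonpos:
  assumes x: "x \<in> mcosD" and n: "(n::real) \<ge> 1" and e: "e = 1 \<or> e = -1"
  shows "1 - of_real e * 2 * x / of_real n \<notin> \<real>\<^sub>\<le>\<^sub>0"
proof
  assume "1 - of_real e * 2 * x / of_real n \<in> \<real>\<^sub>\<le>\<^sub>0"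
  then obtain t where t: "1 - of_real e * 2 * x / of_real n = of_real t" "t \<le> 0"
    by (auto simp: nonpos_Reals_def)
  have ee: "e * e = 1" using e by auto
  have "of_real e * 2 * x = of_real n * (1 - of_real t)"
    using t(1) n by (simp add: field_simps)
  hence "of_real e * (of_real e * 2 * x) = of_real e * (of_real n * (1 - of_real t))" by simp
  moreover have "of_real e * (of_real e * 2 * x) = 2 * x"
    using ee by (metis mult.assoc mult_1 of_real_1 of_real_mult)
  ultimately have "2 * x = of_real (e * n * (1 - t))"
    by simp
  hence "x = of_real (e * n * (1 - t) / 2)" by (simp add: mult.commute)
  from mcosD_real[OF x this] have "\<bar>e * n * (1 - t) / 2\<bar> < 1/2" .
  moreover have "\<bar>e * n * (1 - t) / 2\<bar> = n * (1 - t) / 2" using e n t(2) by (auto simp: abs_mult)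
  moreover have "n * (1 - t) \<ge> 1 * 1" using n t(2) by (intro mult_mono) auto
  ultimately show False by simp
qed

lemma algebra_fder:
  fixes n x :: complex and s :: nat
  assumes n: "n \<noteq> 0" and w1: "1 - 2*x/n \<noteq> 0" and w2: "1 + 2*x/n \<noteq> 0"
  shows "(n/2)^s * (- ((2*x/n)^(Suc s) / (1 - 2*x/n)) * (2/n) + (-1)^s * (- ((-2*x/n)^(Suc s) / (1 - (-2*x/n))) * (-2/n)))
     = - (x ^ Suc s * 8 / (n\<^sup>2 - 4 * x\<^sup>2))"
proof -
  have e1: "(n/2)^s * (2/n)^s = 1"
  proof -
    have "(n/2)^s * (2/n)^s = ((n/2) * (2/n))^s" by (rule power_mult_distrib[symmetric])
    also have "(n/2) * (2/n) = 1" using n by simp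
    finally show ?thesis by simp
  qed
  have a: "(2*x/n)^(Suc s) = (2/n)^s * (2/n) * x^Suc s"
  proof -
    have "(2*x/n)^(Suc s) = ((2/n) * x)^Suc s" by (simp add: mult.commute)
    also have "\<dots> = (2/n)^Suc s * x^Suc s" by (rule power_mult_distrib)
    finally show ?thesis by (simp add: mult_ac)
  qed
  have b: "(-2*x/n)^(Suc s) = (-1)^s * (-1) * ((2/n)^s * (2/n) * x^Suc s)"
  proof -
    have "(-2*x/n) = (-1) * (2*x/n)" by simp
    hence "(-2*x/n)^(Suc s) = (-1)^Suc s * (2*x/n)^Suc s" by (simp only: power_mult_distrib)
    thus ?thesis unfolding a by simp
  qed
  have d1: "n - 2*x \<noteq> 0" using w1 n by (simp add: field_simps)
  have d2: "n + 2*x \<noteq> 0" using w2 n by (simp add: field_simps)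
  have "n\<^sup>2 - 4 * x\<^sup>2 = (n - 2*x) * (n + 2*x)" by (simp add: power2_eq_square algebra_simps)
  hence d3: "n\<^sup>2 - 4 * x\<^sup>2 \<noteq> 0" using d1 d2 by simp
  have p: "(-1::complex)^s * (-1)^s = 1"
  proof -
    have "(-1::complex)^s * (-1)^s = (-1)^(s+s)" by (simp only: power_add)
    also have "\<dots> = 1" by simp
    finally show ?thesis .
  qed
  have w1': "1 - 2*x/n = (n - 2*x)/n" using n by (simp add: field_simps)
  have w2': "1 - (-2*x/n) = (n + 2*x)/n" using n by (simp add: field_simps)
  define A where "A = (2/n)^s"
  define B where "B = (n/2)^s"
  define P where "P = (-1::complex)^s"
  have "(n/2)^s * (- ((2*x/n)^(Suc s) / (1 - 2*x/n)) * (2/n) + (-1)^s * (- ((-2*x/n)^(Suc s) / (1 - (-2*x/n))) * (-2/n)))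
     = (B * A) * (- ((2/n) * x^Suc s / ((n - 2*x)/n)) * (2/n) - (P * P) * ( ((2/n) * x^Suc s / ((n + 2*x)/n)) * (2/n)))"
    unfolding a b w1' w2' A_def[symmetric] B_def[symmetric] P_def[symmetric] by (simp add: algebra_simps)
  also have "\<dots> = - ((2/n) * x^Suc s / ((n - 2*x)/n)) * (2/n) - ( ((2/n) * x^Suc s / ((n + 2*x)/n)) * (2/n))"
    using e1 p by (simp add: A_def B_def P_def)
  also have "\<dots> = - (x ^ Suc s * 8 / (n\<^sup>2 - 4 * x\<^sup>2))"
  proof -
    have fac: "n\<^sup>2 - 4 * x\<^sup>2 = (n - 2*x) * (n + 2*x)" by (simp add: power2_eq_square algebra_simps)
    have g: "- ((2/n) * X / ((n - 2*x)/n)) * (2/n) - ( ((2/n) * X / ((n + 2*x)/n)) * (2/n)) = - (X * 8 / ((n - 2*x) * (n + 2*x)))" for X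
    proof -
      have h: "(2/n) * X / (c/n) * (2/n) = 4 * X / (n * c)" if "c \<noteq> 0" for c
        using that n by (simp add: field_simps)
      have h2: "4 * X / (n * c) + 4 * X / (n * d) = 4 * X * (c + d) / (n * c * d)" if "c \<noteq> 0" "d \<noteq> 0" for c d
        using that n by (simp add: field_simps)
      have "- ((2/n) * X / ((n - 2*x)/n)) * (2/n) - ( ((2/n) * X / ((n + 2*x)/n)) * (2/n))
         = - (4 * X / (n * (n - 2*x)) + 4 * X / (n * (n + 2*x)))"
        using h[OF d1] h[OF d2] by simp
      also have "\<dots> = - (4 * X * ((n - 2*x) + (n + 2*x)) / (n * (n - 2*x) * (n + 2*x)))"
        using h2[OF d1 d2] by simp
      also have "(n - 2*x) + (n + 2*x) = 2 * n" by simp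
      also have "- (4 * X * (2 * n) / (n * (n - 2 * x) * (n + 2 * x))) = - (X * 8 / ((n - 2*x) * (n + 2*x)))"
      proof -
        have q: "4 * X * (2 * n) / (n * P) = X * 8 / P" for P using n by (simp add: field_simps)
        show ?thesis using q[of "(n - 2*x) * (n + 2*x)"] by (simp only: mult.assoc)
      qed
      finally show ?thesis .
    qed
    show ?thesis unfolding fac by (rule g)
  qed
  finally show ?thesis .
qed

lemma fterm_deriv:
  assumes r: "r \<ge> 1" and x: "x \<in> mcosD"
  shows "(fterm r m has_field_derivative fder r m x) (at x)"
proof -
  define n :: complex where "n = of_nat (2*m+1)"
  have n0: "n \<noteq> 0" unfolding n_def by (simp only: of_nat_eq_0_iff)
  have c1: "1 - 2 * x / n \<notin> \<real>\<^sub>\<le>\<^sub>0"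
    using notin_nonpos[OF x, of "real (2*m+1)" 1] by (simp add: n_def)
  have c2: "1 - (- 2 * x / n) \<notin> \<real>\<^sub>\<le>\<^sub>0"
    using notin_nonpos[OF x, of "real (2*m+1)" "-1"] by (simp add: n_def)
  have w1: "1 - 2 * x / n \<noteq> 0" using c1 by auto
  have w2: "1 + 2 * x / n \<noteq> 0" using c2 by auto
  have D1: "((\<lambda>x. LogP r (2 * x / n)) has_field_derivative (- ((2*x/n)^r / (1 - 2*x/n))) * (2/n)) (at x)"
    by (rule DERIV_chain2[where g="\<lambda>x. 2 * x / n" and x=x, OF LogP_deriv[OF c1]]) (auto intro!: derivative_eq_intros simp: n0)
  have D2: "((\<lambda>x. LogP r (- 2 * x / n)) has_field_derivative (- ((-2*x/n)^r / (1 - (-2*x/n)))) * (-2/n)) (at x)"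
    by (rule DERIV_chain2[where g="\<lambda>x. - 2 * x / n" and x=x, OF LogP_deriv[OF c2]]) (auto intro!: derivative_eq_intros simp: n0)
  have D: "(fterm r m has_field_derivative
     (n/2)^(r-1) * ((- ((2*x/n)^r / (1 - 2*x/n))) * (2/n) + (-1)^(r-1) * ((- ((-2*x/n)^r / (1 - (-2*x/n)))) * (-2/n)))) (at x)"
    unfolding fterm_def[abs_def] n_def[symmetric]
    by (rule DERIV_cmult, rule DERIV_add[OF D1], rule DERIV_cmult[OF D2])
  obtain s where s: "r = Suc s" using r by (cases r) auto
  have "(n/2)^(r-1) * ((- ((2*x/n)^r / (1 - 2*x/n))) * (2/n) + (-1)^(r-1) * ((- ((-2*x/n)^r / (1 - (-2*x/n)))) * (-2/n)))
        = fder r m x"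
    unfolding s fder_def n_def[symmetric] using algebra_fder[OF n0 w1 w2, of s] by simp
  with D show ?thesis by simp
qed

lemma fterm_bound:
  assumes r: "r \<ge> 1" and y: "norm y \<le> R" and N: "4 * R \<le> real (2*m+1)"
  shows "norm (fterm r m y) \<le> 16 * R ^ (r+1) / real (2*m+1) ^ 2"
proof -
  define N where "N = real (2*m+1)"
  define n :: complex where "n = of_nat (2*m+1)"
  have N0: "N > 0" by (simp add: N_def)
  obtain s where s: "r = Suc s" using r by (cases r) auto
  have R0: "R \<ge> 0" using y norm_ge_zero order.trans by blast
  define \<rho> where "\<rho> = 2 * R / N"
  have nN: "norm n = N" unfolding N_def n_def by (rule norm_of_nat)
  have e1: "norm (2 * y / n) = 2 * norm y / N" by (simp add: norm_divide nN norm_mult)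
  have e2: "norm (- 2 * y / n) = 2 * norm y / N" by (simp add: norm_divide nN norm_mult)
  have yy: "2 * norm y / N \<le> \<rho>" unfolding \<rho>_def using y N0 by (simp add: divide_right_mono)
  have n1: "norm (2 * y / n) \<le> \<rho>" using e1 yy by simp
  have n2: "norm (- 2 * y / n) \<le> \<rho>" using e2 yy by simp
  have \<rho>h: "\<rho> \<le> 1/2" using N N0 by (simp add: \<rho>_def N_def field_simps)
  have L1: "norm (LogP r (2 * y / n)) \<le> 2 * \<rho> ^ (r+1)"
    using LogP_bound[of "2 * y / n" r] n1 \<rho>h
    by (meson mult_left_mono norm_ge_zero order.trans power_mono zero_le_numeral)
  have L2: "norm (LogP r (- 2 * y / n)) \<le> 2 * \<rho> ^ (r+1)"
    using LogP_bound[of "- 2 * y / n" r] n2 \<rho>h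
    by (meson mult_left_mono norm_ge_zero order.trans power_mono zero_le_numeral)
  have "fterm r m y = (n/2)^s * (LogP r (2 * y / n) + (-1) ^ s * LogP r (- 2 * y / n))"
    unfolding fterm_def s n_def by simp
  hence "norm (fterm r m y) = (N/2)^s * norm (LogP r (2 * y / n) + (-1) ^ s * LogP r (- 2 * y / n))"
    by (simp add: norm_mult norm_power norm_divide nN)
  also have "\<dots> \<le> (N/2)^s * (norm (LogP r (2 * y / n)) + norm (LogP r (- 2 * y / n)))"
    using N0 by (intro mult_left_mono) (auto intro: order.trans[OF norm_triangle_ineq] simp: norm_mult norm_power)
  also have "\<dots> \<le> (N/2)^s * (4 * \<rho> ^ (r+1))"
    using L1 L2 N0 by (intro mult_left_mono) auto
  also have "\<dots> = 4 * ((N/2) * \<rho>)^s * \<rho>^2"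
  proof -
    have A: "((N/2)*\<rho>)^s = (N/2)^s * \<rho>^s" by (rule power_mult_distrib)
    show ?thesis unfolding A s by (simp add: power2_eq_square mult_ac)
  qed
  also have "(N/2) * \<rho> = R" using N0 by (simp add: \<rho>_def)
  also have "4 * R ^ s * \<rho>^2 = 16 * R ^ (r+1) / N^2"
    using N0 by (simp add: \<rho>_def s power_divide field_simps power2_eq_square)
  finally show ?thesis by (simp add: N_def)
qed

lemma open_mcosD: "open mcosD"
proof -
  have "closed {z::complex. Im z = 0 \<and> \<bar>Re z\<bar> \<ge> 1/2}"
    by (intro closed_Collect_conj closed_Collect_eq closed_Collect_le continuous_intros)
  thus ?thesis unfolding mcosD_def by (simp add: open_Compl)
qed

lemma summable_odd_sq: "summable (\<lambda>m. C / real (2*m+1) ^ 2)"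
proof -
  have "summable (\<lambda>m. inverse (real (2*m+1) ^ 2))"
  proof (rule summable_comparison_test'[where N=1])
    show "summable (\<lambda>n. inverse (real n ^ 2))" by (rule inverse_power_summable) simp
  next
    fix n :: nat assume "1 \<le> n"
    thus "norm (inverse (real (2*n+1) ^ 2)) \<le> inverse (real n ^ 2)"
      by (auto intro!: le_imp_inverse_le power_mono)
  qed
  hence "summable (\<lambda>m. C * inverse (real (2*m+1) ^ 2))" by (rule summable_mult)
  thus ?thesis by (simp add: divide_inverse)
qed

lemma mcos_series:
  assumes r: "r \<ge> 1"
  shows "\<exists>g g'. \<forall>x \<in> mcosD. ((\<lambda>m. fterm r m x) sums g x) \<and> ((\<lambda>m. fder r m x) sums g' x) \<and> (g has_field_derivative g' x) (at x)"
proof (rule series_and_derivative_comparison_local[OF open_mcosD])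
  fix m x assume "x \<in> mcosD"
  thus "(fterm r m has_field_derivative fder r m x) (at x)" by (rule fterm_deriv[OF r])
next
  fix x assume "x \<in> mcosD"
  define R where "R = norm x + 1"
  have ev: "\<forall>\<^sub>F m in sequentially. \<forall>y\<in>ball x 1 \<inter> mcosD. norm (fterm r m y) \<le> 16 * R ^ (r+1) / real (2*m+1) ^ 2"
    using eventually_ge_at_top[of "nat \<lceil>4 * R\<rceil>"]
  proof eventually_elim
    case (elim m)
    show ?case
    proof
      fix y assume "y \<in> ball x 1 \<inter> mcosD"
      hence "dist x y < 1" by auto
      hence "norm y \<le> R" unfolding R_def using norm_triangle_ineq2[of y x] by (simp add: dist_norm norm_minus_commute)
      moreover have "4 * R \<le> real (2*m+1)" using elim by linarith
      ultimately show "norm (fterm r m y) \<le> 16 * R ^ (r+1) / real (2*m+1) ^ 2"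
        by (rule fterm_bound[OF r])
    qed
  qed
  show "\<exists>d h. 0 < d \<and> summable h \<and> (\<forall>\<^sub>F n in sequentially. \<forall>y\<in>ball x d \<inter> mcosD. norm (fterm r n y) \<le> h n)"
    by (rule exI[of _ 1], rule exI[of _ "\<lambda>m. 16 * R ^ (r+1) / real (2*m+1) ^ 2"]) (intro conjI zero_less_one summable_odd_sq ev)
qed

lemma digamma_cot:
  fixes z :: complex
  assumes z: "z \<notin> \<int>"
  shows "Digamma (1 - z) - Digamma z = of_real pi * cot (of_real pi * z)"
proof -
  have z1: "z \<notin> \<int>\<^sub>\<le>\<^sub>0" using z by (rule not_in_Ints_imp_not_in_nonpos_Ints)
  have z2: "1 - z \<notin> \<int>\<^sub>\<le>\<^sub>0"
  proof (rule not_in_Ints_imp_not_in_nonpos_Ints)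
    show "1 - z \<notin> \<int>"
    proof
      assume "1 - z \<in> \<int>"
      hence "1 - (1 - z) \<in> \<int>" by (rule Ints_diff[OF Ints_1])
      thus False using z by simp
    qed
  qed
  have G1: "(rGamma has_field_derivative -rGamma z * Digamma z) (at z)"
    by (rule has_field_derivative_rGamma_no_nonpos_int[OF z1])
  have G2: "((\<lambda>z. rGamma (1 - z)) has_field_derivative (-rGamma (1 - z) * Digamma (1 - z)) * (-1)) (at z)"
    by (rule DERIV_chain2[where g = "\<lambda>z. 1 - z", OF has_field_derivative_rGamma_no_nonpos_int[OF z2]])
       (auto intro!: derivative_eq_intros)
  note D1 = DERIV_mult[OF G1 G2]
  have D2: "((\<lambda>z. rGamma z * rGamma (1 - z)) has_field_derivative cos (of_real pi * z) * (of_real pi * 1) / of_real pi) (at z)"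
    unfolding rGamma_reflection_complex
    by (rule DERIV_cdivide, rule DERIV_chain2[where f = sin, OF DERIV_sin]) (auto intro!: derivative_eq_intros)
  have eq: "rGamma z * rGamma (1 - z) * (Digamma (1 - z) - Digamma z) = cos (of_real pi * z)"
    using DERIV_unique[OF D1 D2] by (simp add: algebra_simps)
  have sn: "sin (of_real pi * z) \<noteq> 0"
  proof
    assume "sin (of_real pi * z) = 0"
    then obtain j :: int where "of_real pi * z = of_real (of_int j * pi)" by (auto simp: sin_eq_0)
    hence "z = of_int j" by (simp add: field_simps)
    thus False using z by auto
  qed
  from eq have "sin (of_real pi * z) / of_real pi * (Digamma (1 - z) - Digamma z) = cos (of_real pi * z)"
    by (simp add: rGamma_reflection_complex)
  thus ?thesis using sn by (simp add: cot_def field_simps)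
qed

lemma tan_series:
  assumes x: "x \<in> mcosD"
  shows "(\<lambda>m. 8 * x / ((of_nat (2*m+1))\<^sup>2 - 4 * x\<^sup>2)) sums (of_real pi * tan (of_real pi * x))"
proof -
  define a where "a = 1/2 + x"
  define b where "b = 1/2 - x"
  have ak: "a + of_nat k \<noteq> 0" for k
  proof
    assume h: "a + of_nat k = 0"
    have "x = (a + of_nat k) - of_nat k - 1/2" by (simp add: a_def)
    also have "\<dots> = of_real (- (real k + 1/2))" unfolding h by simp
    finally have "x = of_real (- (real k + 1/2))" .
    from mcosD_real[OF x this] show False by simp
  qed
  have bk: "b + of_nat k \<noteq> 0" for k
  proof
    assume h: "b + of_nat k = 0"
    have "x = 1/2 + of_nat k - (b + of_nat k)" by (simp add: b_def)
    also have "\<dots> = of_real (real k + 1/2)" unfolding h by simp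
    finally have "x = of_real (real k + 1/2)" .
    from mcosD_real[OF x this] show False by simp
  qed
  have sa: "(\<lambda>k. inverse (of_nat (Suc k)) - inverse (a + of_nat k)) sums (Digamma a + euler_mascheroni)"
    using summable_Digamma[of a] ak[of 0] by (simp add: Digamma_def summable_sums)
  have sb: "(\<lambda>k. inverse (of_nat (Suc k)) - inverse (b + of_nat k)) sums (Digamma b + euler_mascheroni)"
    using summable_Digamma[of b] bk[of 0] by (simp add: Digamma_def summable_sums)
  have s: "(\<lambda>k. inverse (b + of_nat k) - inverse (a + of_nat k)) sums (Digamma a - Digamma b)"
    using sums_diff[OF sa sb] by simp
  have tm: "inverse (b + of_nat k) - inverse (a + of_nat k) = 8 * x / ((of_nat (2*k+1))\<^sup>2 - 4 * x\<^sup>2)" for k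
  proof -
    have e1: "b + of_nat k = (of_nat (2*k+1) - 2*x) / 2" by (simp add: b_def field_simps)
    have e2: "a + of_nat k = (of_nat (2*k+1) + 2*x) / 2" by (simp add: a_def field_simps)
    have n1: "of_nat (2*k+1) - 2*x \<noteq> 0" using bk[of k] e1 by auto
    have n2: "of_nat (2*k+1) + 2*x \<noteq> 0" using ak[of k] e2 by auto
    have fac: "(of_nat (2*k+1))\<^sup>2 - 4 * x\<^sup>2 = (of_nat (2*k+1) - 2*x) * (of_nat (2*k+1) + 2*x)"
      by (simp add: power2_eq_square algebra_simps)
    have g: "inverse ((N - 2*x)/2) - inverse ((N + 2*x)/2) = 8 * x / ((N - 2*x) * (N + 2*x))"
      if "N - 2*x \<noteq> 0" "N + 2*x \<noteq> 0" for N :: complex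
      using that by (simp add: field_simps)
    show ?thesis unfolding e1 e2 fac by (rule g[OF n1 n2])
  qed
  have bZ: "b \<notin> \<int>"
  proof
    assume "b \<in> \<int>"
    then obtain j where "b = of_int j" by (auto elim: Ints_cases)
    hence "x = of_real (1/2 - of_int j)" by (simp add: b_def algebra_simps)
    from mcosD_real[OF x this] have h: "\<bar>1/2 - real_of_int j\<bar> < 1/2" by simp
    show False
    proof (cases "j \<le> 0")
      case True
      hence "real_of_int j \<le> 0" by simp
      thus False using h by (simp add: abs_less_iff)
    next
      case False
      hence "real_of_int j \<ge> 1" by simp
      thus False using h by (simp add: abs_less_iff)
    qed
  qed
  have "Digamma a - Digamma b = of_real pi * cot (of_real pi * b)"
    using digamma_cot[OF bZ] by (simp add: a_def b_def)
  also have "cot (of_real pi * b) = tan (of_real pi * x)"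
  proof -
    have "of_real pi * b = of_real pi / 2 - of_real pi * x" by (simp add: b_def algebra_simps)
    thus ?thesis by (simp add: cot_def tan_def sin_cos_eq[of "of_real pi * x"] cos_sin_eq[of "of_real pi * x"])
  qed
  finally show ?thesis using s tm by simp
qed


lemma cos_pi_nz: assumes x: "x \<in> mcosD" shows "cos (of_real pi * x) \<noteq> 0"
proof
  assume "cos (of_real pi * x) = 0"
  then obtain j :: int where "of_real pi * x = of_real (of_int j * pi) + of_real pi / 2"
    by (auto simp: cos_eq_0)
  hence "of_real pi * x = of_real pi * of_real (of_int j + 1/2)" by (simp add: algebra_simps)
  hence "x = of_real (of_int j + 1/2)" by simp
  from mcosD_real[OF x this] have h: "\<bar>real_of_int j + 1/2\<bar> < 1/2" by simp
  show False
  proof (cases "j \<ge> 0")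
    case True
    hence "real_of_int j \<ge> 0" by simp
    thus False using h by (simp add: abs_less_iff)
  next
    case False
    hence "real_of_int j \<le> -1" by simp
    thus False using h by (simp add: abs_less_iff)
  qed
qed

lemma zero_in_mcosD: "0 \<in> mcosD" by (simp add: mcosD_def)

lemma powi_lemma: fixes x :: complex shows "x powi (1 - int (Suc (Suc s))) = inverse (x ^ Suc s)"
proof -
  have "1 - int (Suc (Suc s)) = - int (Suc s)" by simp
  hence "x powi (1 - int (Suc (Suc s))) = x powi (- int (Suc s))" by simp
  also have "\<dots> = inverse (x powi int (Suc s))" by (rule power_int_minus)
  also have "x powi int (Suc s) = x ^ Suc s" by (rule power_int_of_nat)
  finally show ?thesis .
qed

theorem proposition3p5:
  fixes r :: nat
  assumes "r \<ge> 2"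
  shows "mcos r 0 = 1 \<and> deriv (mcos r) 0 = 0 \<and>
    (\<forall>x \<in> mcosD - {0}.
       deriv (deriv (mcos r)) x =
         (1 - x powi (1 - int r)) * (deriv (mcos r) x)\<^sup>2 / mcos r x
         + of_nat (r - 1) * deriv (mcos r) x / x
         - of_real (pi\<^sup>2) * x ^ (r - 1) * mcos r x)"
proof -
  obtain s where r: "r = Suc (Suc s)" using assms by (metis add_2_eq_Suc le_Suc_ex)
  have r1: "r \<ge> 1" using assms by simp
  obtain g g' where gg: "\<And>x. x \<in> mcosD \<Longrightarrow> ((\<lambda>m. fterm r m x) sums g x) \<and> ((\<lambda>m. fder r m x) sums g' x) \<and> (g has_field_derivative g' x) (at x)"
    using mcos_series[OF r1] by blast
  define G where "G y = (- of_real pi) * (y ^ (r - 1) * tan (of_real pi * y))" for y :: complex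
  have mc: "mcos r y = exp (g y)" if "y \<in> mcosD" for y
    using gg[OF that] sums_unique[of "\<lambda>m. fterm r m y" "g y"] by (simp add: mcos_eq)
  have g'G: "g' y = G y" if y: "y \<in> mcosD" for y
  proof -
    have "(\<lambda>m. - (y ^ (r - 1)) * (8 * y / ((of_nat (2*m+1))\<^sup>2 - 4 * y\<^sup>2))) sums (- (y ^ (r - 1)) * (of_real pi * tan (of_real pi * y)))"
      by (rule sums_mult[OF tan_series[OF y]])
    moreover have "- (y ^ (r - 1)) * (8 * y / ((of_nat (2*m+1))\<^sup>2 - 4 * y\<^sup>2)) = fder r m y" for m
      by (simp add: fder_def r)
    ultimately have "(\<lambda>m. fder r m y) sums (- (y ^ (r - 1)) * (of_real pi * tan (of_real pi * y)))" by simp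
    with gg[OF y] have "g' y = - (y ^ (r - 1)) * (of_real pi * tan (of_real pi * y))"
      using sums_unique2 by blast
    thus ?thesis by (simp add: G_def)
  qed
  have D1: "(mcos r has_field_derivative exp (g y) * G y) (at y)" if y: "y \<in> mcosD" for y
  proof -
    have "((\<lambda>y. exp (g y)) has_field_derivative exp (g y) * g' y) (at y)"
      using gg[OF y] by (auto intro!: derivative_eq_intros)
    hence "((\<lambda>y. exp (g y)) has_field_derivative exp (g y) * G y) (at y)" using g'G[OF y] by simp
    thus ?thesis by (rule has_field_derivative_transform_within_open[OF _ open_mcosD y]) (simp add: mc)
  qed
  have dm: "deriv (mcos r) y = exp (g y) * G y" if "y \<in> mcosD" for y
    using D1[OF that] by (rule DERIV_imp_deriv)
  have m0: "mcos r 0 = 1"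
    by (simp add: mcos_eq fterm_def LogP_0)
  have d0: "deriv (mcos r) 0 = 0"
    using dm[OF zero_in_mcosD] by (simp add: G_def r)
  have main: "deriv (deriv (mcos r)) x =
         (1 - x powi (1 - int r)) * (deriv (mcos r) x)\<^sup>2 / mcos r x
         + of_nat (r - 1) * deriv (mcos r) x / x
         - of_real (pi\<^sup>2) * x ^ (r - 1) * mcos r x" if x: "x \<in> mcosD" "x \<noteq> 0" for x
  proof -
    have cnz: "cos (of_real pi * x) \<noteq> 0" by (rule cos_pi_nz[OF x(1)])
    have T: "((\<lambda>y. tan (of_real pi * y)) has_field_derivative inverse ((cos (of_real pi * x))\<^sup>2) * of_real pi) (at x)"
      by (rule DERIV_chain2[where g = "\<lambda>y. of_real pi * y", OF DERIV_tan[OF cnz]]) (auto intro!: derivative_eq_intros)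
    have P: "((\<lambda>y. y ^ (r - 1)) has_field_derivative of_nat (r - 1) * x ^ (r - 1 - 1)) (at x)"
      by (auto intro!: derivative_eq_intros)
    have GD: "(G has_field_derivative (- of_real pi) * (of_nat (r - 1) * x ^ (r - 1 - 1) * tan (of_real pi * x) + inverse ((cos (of_real pi * x))\<^sup>2) * of_real pi * x ^ (r - 1))) (at x)"
      unfolding G_def[abs_def] by (rule DERIV_cmult, rule DERIV_mult[OF P T])
    have gD: "((\<lambda>y. exp (g y)) has_field_derivative exp (g x) * G x) (at x)"
      using gg[OF x(1)] g'G[OF x(1)] by (auto intro!: derivative_eq_intros)
    have MD: "((\<lambda>y. exp (g y) * G y) has_field_derivative
        exp (g x) * G x * G x + (- of_real pi) * (of_nat (r - 1) * x ^ (r - 1 - 1) * tan (of_real pi * x) + inverse ((cos (of_real pi * x))\<^sup>2) * of_real pi * x ^ (r - 1)) * exp (g x)) (at x)"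
      by (rule DERIV_mult[OF gD GD])
    have MD': "(deriv (mcos r) has_field_derivative
        exp (g x) * G x * G x + (- of_real pi) * (of_nat (r - 1) * x ^ (r - 1 - 1) * tan (of_real pi * x) + inverse ((cos (of_real pi * x))\<^sup>2) * of_real pi * x ^ (r - 1)) * exp (g x)) (at x)"
      by (rule has_field_derivative_transform_within_open[OF MD open_mcosD x(1)]) (simp add: dm)
    have dd: "deriv (deriv (mcos r)) x = exp (g x) * G x * G x + (- of_real pi) * (of_nat (r - 1) * x ^ (r - 1 - 1) * tan (of_real pi * x) + inverse ((cos (of_real pi * x))\<^sup>2) * of_real pi * x ^ (r - 1)) * exp (g x)"
      by (rule DERIV_imp_deriv[OF MD'])
    have sec: "inverse ((cos (of_real pi * x))\<^sup>2) = 1 + (tan (of_real pi * x))\<^sup>2"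
      using cnz sin_squared_eq[of "of_real pi * x"] by (simp add: tan_def field_simps power2_eq_square)
    define E where "E = exp (g x)"
    define t where "t = tan (of_real pi * x)"
    define p where "p = (of_real pi :: complex)"
    have E0: "E \<noteq> 0" by (simp add: E_def)
    show ?thesis
      unfolding dd
      unfolding dm[OF x(1)] mc[OF x(1)]
      unfolding G_def
      unfolding sec r powi_lemma
      unfolding E_def[symmetric] t_def[symmetric] p_def[symmetric]
      using E0 x(2) by (simp add: field_simps power2_eq_square p_def)
  qed
  show ?thesis using m0 d0 main by blast
qed

end
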